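(* Consider the algorithm described in the context. Suppose: (i) $\|\hat H_k\|\leq\kappa_H$ for all $k$, some $\kappa_H\geq1$; (ii) $f$ is bounded below by $f_{\mathrm{low}}$, twice continuously differentiable with $L_H$-Lipschitz Hessian, and $\|\nabla^2 f(\mathbf{x}_k)\|\leq M$ for all $k$; (iii) every step satisfies $\hat{m}_k(\mathbf{0}) - \hat{m}_k(\hat{\mathbf{s}}_k) \geq \kappa_s \max\left(\|\hat{\mathbf{g}}_k\| \min\left(\Delta_k, \frac{\|\hat{\mathbf{g}}_k\|}{\max(\|\hat{H}_k\|,1)}\right), \hat{\tau}^m_k\Delta_k^2\right)$ for some $\kappa_s>0$. Let $\epsilon>0$ with $\theta := (1-\alpha)^2 - \frac{4M(r-1)\alpha^2}{\epsilon(1-\alpha)^2}>0$, and let $K\geq0$. If $\sigma_k\geq\epsilon$ for all $k\leq K$, then $$\#(\mathcal{D}(\gamma_{\mathrm{dec}}^{-1}\Delta)\cap\mathcal{U})\leq c_3\cdot\#(\mathcal{D}(\gamma_{\mathrm{inc}}^{-1}\Delta)\cap\mathcal{S})+c_4(\Delta)\quad\text{for all }\Delta\leq\Delta_0,$$ and $$\#(\mathcal{D}^C(\gamma_{\mathrm{inc}}^{-1}\Delta)\cap\mathcal{S})\leq c_3^{-1}\cdot\#(\mathcal{D}^C(\gamma_{\mathrm{dec}}^{-1}\Delta)\cap\mathcal{U})\quad\text{for all }\Delta\leq\min(\Delta_0,\gamma_{\mathrm{inc}}^{-1}\Delta_{\max}),$$ where $c_3:=\frac{\log(\gamma_{\mathrm{inc}})}{\log(\gamma_{\mathrm{dec}}^{-1})}$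 and $c_4(\Delta):=\frac{\log(\Delta_0/\Delta)}{\log(\gamma_{\mathrm{dec}}^{-1})}$.
   Context: Algorithm: Let $f:\mathbb{R}^n\to\mathbb{R}$. Fix $\mathbf{x}_0$, $p\in\{1,\ldots,n\}$, $0<\Delta_0\leq\Delta_{\max}$, $0<\gamma_{\mathrm{dec}}<1<\gamma_{\mathrm{inc}}$, $\eta\in(0,1)$, $\mu>0$. For $k=0,1,\ldots$: select a random $P_k\in\mathbb{R}^{n\times p}$; build $\hat m_k(\hat{\mathbf{s}})=f(\mathbf{x}_k)+\hat{\mathbf{g}}_k^T\hat{\mathbf{s}}+\frac12\hat{\mathbf{s}}^T\hat H_k\hat{\mathbf{s}}$ ($\hat H_k$ symmetric) which is $P_k$-fully quadratic: constants $\kappa_{\mathrm{ef}},\kappa_{\mathrm{eg}},\kappa_{\mathrm{eh}}>0$ independent of $k$ with $|f(\mathbf{x}_k+P_k\hat{\mathbf{s}})-\hat m_k(\hat{\mathbf{s}})|\leq\kappa_{\mathrm{ef}}\Delta_k^3$, $\|P_k^T\nabla f(\mathbf{x}_k+P_k\hat{\mathbf{s}})-\nabla\hat m_k(\hat{\mathbf{s}})\|\leq\kappa_{\mathrm{eg}}\Delta_k^2$, $\|P_k^T\nabla^2 f(\mathbf{x}_k+P_k\hat{\mathbf{s}})P_k-\hat H_k\|\leq\kappa_{\mathrm{eh}}\Delta_k$ for all $\|\hat{\mathbf{s}}\|\leq\Delta_k$; compute a step $\hat{\mathbf{s}}_k$ with $\|\hat{\mathbf{s}}_k\|\leq\Delta_k$;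 let $R_k:=\frac{f(\mathbf{x}_k)-f(\mathbf{x}_k+P_k\hat{\mathbf{s}}_k)}{\hat m_k(\mathbf{0})-\hat m_k(\hat{\mathbf{s}}_k)}$, $\hat\tau^m_k:=\max(-\lambda_{\min}(\hat H_k),0)$, $\hat\sigma^m_k:=\max(\|\hat{\mathbf{g}}_k\|,\hat\tau^m_k)$; if $R_k\geq\eta$ and $\hat\sigma^m_k\geq\mu\Delta_k$ the iteration is successful: $\mathbf{x}_{k+1}=\mathbf{x}_k+P_k\hat{\mathbf{s}}_k$, $\Delta_{k+1}=\min(\gamma_{\mathrm{inc}}\Delta_k,\Delta_{\max})$; otherwise unsuccessful: $\mathbf{x}_{k+1}=\mathbf{x}_k$, $\Delta_{k+1}=\gamma_{\mathrm{dec}}\Delta_k$. Criticality: $\sigma_k:=\max(\|\nabla f(\mathbf{x}_k)\|,\max(-\lambda_{\min}(\nabla^2 f(\mathbf{x}_k)),0))$. $\alpha\in(0,1)$ is the well-alignment parameter (a matrix $P_k$ is well-aligned if $\|P_k\|\leq P_{\max}$, $\|P_k^T\nabla f(\mathbf{x}_k)\|\geq(1-\alpha)\|\nabla f(\mathbf{x}_k)\|$, $\|\hat{\mathbf{v}}_r\|\geq1-\alpha$, $(\hat{\mathbf{v}}_i^T\hat{\mathbf{v}}_r)^2\leq4\alpha^2$ for $i<r$, where $\nabla^2 f(\mathbf{x}_k)=\sum_{i=1}^r\lambda_i\mathbf{v}_i\mathbf{v}_i^T$ with $\lambda_1\geq\cdots\geq\lambda_r$, $r=\operatorname{rank}(\nabla^2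 f(\mathbf{x}_k))$, orthonormal $\mathbf{v}_i$, and $\hat{\mathbf{v}}_i=P_k^T\mathbf{v}_i$); $r$ in $\theta$ is this rank. Index sets, for fixed $K$: $\mathcal{S}$ (resp. $\mathcal{U}$) = successful (resp. unsuccessful) iterations in $\{0,\ldots,K\}$; $\mathcal{D}(\Delta)$ (resp. $\mathcal{D}^C(\Delta)$) = iterations in $\{0,\ldots,K\}$ with $\Delta_k\geq\Delta$ (resp. $\Delta_k<\Delta$); $\#$ denotes cardinality. *)

theory Defs
  imports "HOL-Analysis.Analysis"
begin

definition opnorm :: "real^'m^'n \<Rightarrow> real" where
  "opnorm A = onorm (\<lambda>v. A *v v)"

text \<open>Real eigenvalues of a square matrix and the smallest one
  (used for symmetric matrices, where all eigenvalues are real).\<close>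
definition eigvals :: "real^'n^'n \<Rightarrow> real set" where
  "eigvals A = {l. \<exists>v. v \<noteq> 0 \<and> A *v v = l *\<^sub>R v}"

definition lambda_min :: "real^'n^'n \<Rightarrow> real" where
  "lambda_min A = Min (eigvals A)"

definition qmodel :: "real \<Rightarrow> real^'p \<Rightarrow> real^'p^'p \<Rightarrow> real^'p \<Rightarrow> real" where
  "qmodel fx g H s = fx + g \<bullet> s + (1/2) * (s \<bullet> (H *v s))"

definition tau_m :: "real^'p^'p \<Rightarrow> real" where
  "tau_m H = max (- lambda_min H) 0"

definition sigma_m :: "real^'p \<Rightarrow> real^'p^'p \<Rightarrow> real" where
  "sigma_m g H = max (norm g) (tau_m H)"

definition crit :: "real^'n \<Rightarrow> real^'n^'n \<Rightarrow> real" where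
  "crit gr Hs = max (norm gr) (max (- lambda_min Hs) 0)"

definition ratio :: "(real^'n \<Rightarrow> real) \<Rightarrow> real^'n \<Rightarrow> real^'p^'n \<Rightarrow> real^'p \<Rightarrow> real^'p^'p \<Rightarrow> real^'p \<Rightarrow> real" where
  "ratio f x P g H s =
     (f x - f (x + P *v s)) / (qmodel (f x) g H 0 - qmodel (f x) g H s)"

definition successful :: "real \<Rightarrow> real \<Rightarrow> (real^'n \<Rightarrow> real) \<Rightarrow> real^'n \<Rightarrow> real^'p^'n
     \<Rightarrow> real^'p \<Rightarrow> real^'p^'p \<Rightarrow> real^'p \<Rightarrow> real \<Rightarrow> bool" where
  "successful \<eta> \<mu> f x P g H s \<Delta> \<longleftrightarrow> ratio f x P g H s \<ge> \<eta> \<and> sigma_m g H \<ge> \<mu> * \<Delta>"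

end

theory Submission
  imports Defs
begin

lemma card_lessSuc:
  "card {k. k < Suc N \<and> Q k} = card {k. k < N \<and> Q k} + (if Q N then 1 else 0)"
proof -
  have e: "{k. k < Suc N \<and> Q k} = (if Q N then insert N {k. k < N \<and> Q k} else {k. k < N \<and> Q k})"
    by (auto simp: less_Suc_eq)
  show ?thesis by (simp add: e)
qed

lemma part1:
  fixes D :: "nat \<Rightarrow> real"
  assumes gd: "0 < gd" "gd < 1" and gi: "1 < gi" and dp: "0 < d"
    and upd: "\<And>k. D (Suc k) = (if Sc k then min (gi * D k) dm else gd * D k)"
  shows "ln (max (D N) d) + ln (1/gd) * real (card {k. k < N \<and> D k \<ge> d / gd \<and> \<not> Sc k})
     \<le> ln (max (D 0) d) + ln gi * real (card {k. k < N \<and> D k \<ge> d / gi \<and> Sc k})"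
proof (induction N)
  case 0 then show ?case by simp
next
  case (Suc N)
  have m0: "max (D N) d > 0" using dp by auto
  have step: "ln (max (D (Suc N)) d) + (if D N \<ge> d / gd \<and> \<not> Sc N then ln (1/gd) else 0)
     \<le> ln (max (D N) d) + (if D N \<ge> d / gi \<and> Sc N then ln gi else 0)"
  proof (cases "Sc N")
    case True
    then have u: "D (Suc N) \<le> gi * D N" using upd[of N] by simp
    show ?thesis
    proof (cases "D N \<ge> d / gi")
      case True
      then have "gi * D N \<ge> d" using gi by (simp add: field_simps)
      have a1: "d \<le> gi * d" using gi dp by simp
      have a2: "gi * D N \<le> gi * max (D N) d" using gi by (intro mult_left_mono) auto
      have a3: "gi * d \<le> gi * max (D N) d" using gi by (intro mult_left_mono) auto
      have b1: "D (Suc N) \<le> gi * max (D N) d" using u a2 by linarith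
      have b2: "d \<le> gi * max (D N) d" using a1 a3 by linarith
      have "max (D (Suc N)) d \<le> gi * max (D N) d" using b1 b2 by simp
      then have "ln (max (D (Suc N)) d) \<le> ln (gi * max (D N) d)" using dp by simp
      also have "\<dots> = ln gi + ln (max (D N) d)" using gi m0 by (simp add: ln_mult)
      finally show ?thesis using True \<open>Sc N\<close> by simp
    next
      case False
      then have "gi * D N < d" using gi by (simp add: field_simps)
      then have "max (D (Suc N)) d = d" using u by simp
      then show ?thesis using False \<open>Sc N\<close> dp by simp
    qed
  next
    case False
    then have u: "D (Suc N) = gd * D N" using upd[of N] by simp
    show ?thesis
    proof (cases "D N \<ge> d / gd")
      case True
      then have t: "gd * D N \<ge> d" using gd by (simp add: field_simps)
      have dn: "D N > 0" using t gd dp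
        by (metis mult_pos_pos not_less order_less_le_trans zero_less_mult_pos)
      have "max (D (Suc N)) d = gd * D N" using u t by simp
      then have "ln (max (D (Suc N)) d) = ln gd + ln (D N)" using gd dn by (simp add: ln_mult)
      moreover have "max (D N) d = D N" using t gd dn
        by (smt (verit) mult_left_le_one_le)
      ultimately show ?thesis using True False gd by (simp add: ln_div)
    next
      case f2: False
      then have "gd * D N < d" using gd by (simp add: field_simps)
      then have "max (D (Suc N)) d = d" using u by simp
      then show ?thesis using False f2 dp by simp
    qed
  qed
  show ?case using Suc.IH step
    by (simp only: card_lessSuc of_nat_add) (auto split: if_splits simp: algebra_simps)
qed

lemma part2:
  fixes D :: "nat \<Rightarrow> real"
  assumes gd: "0 < gd" "gd < 1" and gi: "1 < gi" and dp: "0 < d" and dm: "d \<le> dm / gi"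
    and Dpos: "\<And>k. D k > 0"
    and upd: "\<And>k. D (Suc k) = (if Sc k then min (gi * D k) dm else gd * D k)"
  shows "ln (min (D N) d) + ln (1/gd) * real (card {k. k < N \<and> D k < d / gd \<and> \<not> Sc k})
     \<ge> ln (min (D 0) d) + ln gi * real (card {k. k < N \<and> D k < d / gi \<and> Sc k})"
proof (induction N)
  case 0 then show ?case by simp
next
  case (Suc N)
  have m0: "min (D N) d > 0" using dp Dpos[of N] by auto
  have dm': "gi * d \<le> dm" using dm gi by (simp add: field_simps)
  have step: "ln (min (D (Suc N)) d) + (if D N < d / gd \<and> \<not> Sc N then ln (1/gd) else 0)
     \<ge> ln (min (D N) d) + (if D N < d / gi \<and> Sc N then ln gi else 0)"
  proof (cases "Sc N")
    case True
    then have u: "D (Suc N) = min (gi * D N) dm" using upd[of N] by simp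
    show ?thesis
    proof (cases "D N < d / gi")
      case True
      then have t: "gi * D N < d" using gi by (simp add: field_simps)
      have "d \<le> gi * d" using gi dp by simp
      then have "D (Suc N) = gi * D N" using u t dm' by simp
      then have "min (D (Suc N)) d = gi * D N" using t by simp
      moreover have "min (D N) d = D N" using t gi Dpos[of N]
        by (smt (verit) mult_le_cancel_right1)
      ultimately show ?thesis using True \<open>Sc N\<close> gi Dpos[of N] by (simp add: ln_mult)
    next
      case False
      then have "gi * D N \<ge> d" using gi by (simp add: field_simps)
      then have "D (Suc N) \<ge> d" using u dm' gi dp
        by (smt (verit) mult_le_cancel_right1)
      then have "min (D (Suc N)) d = d" by simp
      then show ?thesis using False \<open>Sc N\<close> dp m0 by simp
    qed
  next
    case False
    then have u: "D (Suc N) = gd * D N" using upd[of N] by simp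
    show ?thesis
    proof (cases "D N < d / gd")
      case True
      have "gd * min (D N) d \<le> min (D (Suc N)) d" using u gd dp
        by (smt (verit) mult_le_cancel_right1 mult_left_mono min_def mult.commute)
      moreover have "0 < min (D (Suc N)) d" using Dpos[of "Suc N"] dp by simp
      ultimately have "ln (gd * min (D N) d) \<le> ln (min (D (Suc N)) d)" using gd m0 by simp
      moreover have "ln (gd * min (D N) d) = ln gd + ln (min (D N) d)" using gd m0 using gd m0 by (simp add: ln_mult_pos)
      ultimately show ?thesis using True False gd by (simp add: ln_div)
    next
      case f2: False
      then have "gd * D N \<ge> d" using gd by (simp add: field_simps)
      then have "min (D (Suc N)) d = d" using u by simp
      then show ?thesis using False f2 dp m0 by simp
    qed
  qed
  show ?case using Suc.IH step
    by (simp only: card_lessSuc of_nat_add) (auto split: if_splits simp: algebra_simps)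
qed
theorem lemma3p12:
  fixes f :: "real^'n \<Rightarrow> real"
    and grad :: "real^'n \<Rightarrow> real^'n"
    and Hess :: "real^'n \<Rightarrow> real^'n^'n"
    and x :: "nat \<Rightarrow> real^'n"
    and P :: "nat \<Rightarrow> real^'p^'n"
    and g :: "nat \<Rightarrow> real^'p"
    and H :: "nat \<Rightarrow> real^'p^'p"
    and s :: "nat \<Rightarrow> real^'p"
    and Delta :: "nat \<Rightarrow> real"
    and \<Delta>\<^sub>0 \<Delta>max \<gamma>dec \<gamma>inc \<eta> \<mu> :: real
    and \<kappa>ef \<kappa>eg \<kappa>eh \<kappa>H \<kappa>s flow LH M \<alpha> \<epsilon> :: real
    and K :: nat
  assumes dim: "CARD('p) \<le> CARD('n)"
    and params: "0 < \<Delta>\<^sub>0" "\<Delta>\<^sub>0 \<le> \<Delta>max" "0 < \<gamma>dec" "\<gamma>dec < 1" "1 < \<gamma>inc"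
      "0 < \<eta>" "\<eta> < 1" "0 < \<mu>" "0 < \<alpha>" "\<alpha> < 1"
    (* f twice continuously differentiable with gradient grad and Hessian Hess *)
    and f_deriv: "\<And>y. (f has_derivative (\<lambda>h. grad y \<bullet> h)) (at y)"
    and grad_deriv: "\<And>y. (grad has_derivative (\<lambda>h. Hess y *v h)) (at y)"
    and Hess_cont: "continuous_on UNIV Hess"
    (* (ii) *)
    and f_low: "\<And>y. f y \<ge> flow"
    and Hess_lip: "\<And>y z. opnorm (Hess y - Hess z) \<le> LH * norm (y - z)"
    and Hess_bd: "\<And>k. opnorm (Hess (x k)) \<le> M"
    (* algorithm *)
    and Delta0: "Delta 0 = \<Delta>\<^sub>0"
    and H_sym: "\<And>k. transpose (H k) = H k"
    and fq_pos: "\<kappa>ef > 0" "\<kappa>eg > 0" "\<kappa>eh > 0"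
    and fq_f: "\<And>k sh. norm sh \<le> Delta k \<Longrightarrow>
       \<bar>f (x k + P k *v sh) - qmodel (f (x k)) (g k) (H k) sh\<bar> \<le> \<kappa>ef * Delta k ^ 3"
    and fq_g: "\<And>k sh. norm sh \<le> Delta k \<Longrightarrow>
       norm (transpose (P k) *v grad (x k + P k *v sh) - (g k + H k *v sh)) \<le> \<kappa>eg * Delta k ^ 2"
    and fq_H: "\<And>k sh. norm sh \<le> Delta k \<Longrightarrow>
       opnorm (transpose (P k) ** Hess (x k + P k *v sh) ** P k - H k) \<le> \<kappa>eh * Delta k"
    and step_bd: "\<And>k. norm (s k) \<le> Delta k"
    and x_upd: "\<And>k. x (Suc k) =
       (if successful \<eta> \<mu> f (x k) (P k) (g k) (H k) (s k) (Delta k)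
        then x k + P k *v s k else x k)"
    and Delta_upd: "\<And>k. Delta (Suc k) =
       (if successful \<eta> \<mu> f (x k) (P k) (g k) (H k) (s k) (Delta k)
        then min (\<gamma>inc * Delta k) \<Delta>max else \<gamma>dec * Delta k)"
    (* (i) *)
    and kH: "\<kappa>H \<ge> 1" "\<And>k. opnorm (H k) \<le> \<kappa>H"
    (* (iii) *)
    and ks: "\<kappa>s > 0"
    and decrease: "\<And>k. qmodel (f (x k)) (g k) (H k) 0 - qmodel (f (x k)) (g k) (H k) (s k)
       \<ge> \<kappa>s * max (norm (g k) * min (Delta k) (norm (g k) / max (opnorm (H k)) 1))
                     (tau_m (H k) * Delta k ^ 2)"
    (* epsilon and theta *)
    and eps: "\<epsilon> > 0"
    and theta: "\<And>k. (1 - \<alpha>)^2 - 4 * M * (real (rank (Hess (x k))) - 1) * \<alpha>^2 / (\<epsilon> * (1 - \<alpha>)^2) > 0"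
    and crit: "\<And>k. k \<le> K \<Longrightarrow> crit (grad (x k)) (Hess (x k)) \<ge> \<epsilon>"
  shows
    "(\<forall>\<Delta>. 0 < \<Delta> \<and> \<Delta> \<le> \<Delta>\<^sub>0 \<longrightarrow>
        real (card {k \<in> {0..K}. Delta k \<ge> \<Delta> / \<gamma>dec \<and>
                 \<not> successful \<eta> \<mu> f (x k) (P k) (g k) (H k) (s k) (Delta k)})
        \<le> (ln \<gamma>inc / ln (1 / \<gamma>dec)) *
             real (card {k \<in> {0..K}. Delta k \<ge> \<Delta> / \<gamma>inc \<and>
                 successful \<eta> \<mu> f (x k) (P k) (g k) (H k) (s k) (Delta k)})
          + ln (\<Delta>\<^sub>0 / \<Delta>) / ln (1 / \<gamma>dec))
   \<and> (\<forall>\<Delta>. 0 < \<Delta> \<and> \<Delta> \<le> min \<Delta>\<^sub>0 (\<Delta>max / \<gamma>inc) \<longrightarrow>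
        real (card {k \<in> {0..K}. Delta k < \<Delta> / \<gamma>inc \<and>
                 successful \<eta> \<mu> f (x k) (P k) (g k) (H k) (s k) (Delta k)})
        \<le> (ln (1 / \<gamma>dec) / ln \<gamma>inc) *
             real (card {k \<in> {0..K}. Delta k < \<Delta> / \<gamma>dec \<and>
                 \<not> successful \<eta> \<mu> f (x k) (P k) (g k) (H k) (s k) (Delta k)}))"
proof -
  define Sc where "Sc k \<longleftrightarrow> successful \<eta> \<mu> f (x k) (P k) (g k) (H k) (s k) (Delta k)" for k
  have upd: "\<And>k. Delta (Suc k) = (if Sc k then min (\<gamma>inc * Delta k) \<Delta>max else \<gamma>dec * Delta k)"
    using Delta_upd Sc_def by simp
  have Dpos: "Delta k > 0" for k
  proof (induction k)
    case 0 then show ?case using Delta0 params by simp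
  next
    case (Suc k) then show ?case using upd[of k] params by auto
  qed
  have a: "ln (1/\<gamma>dec) > 0" using params by simp
  have b: "ln \<gamma>inc > 0" using params by simp
  have setq: "{k \<in> {0..K}. Q k} = {k. k < Suc K \<and> Q k}" for Q by auto
  show ?thesis
  proof (intro conjI allI impI)
    fix d assume d: "0 < d \<and> d \<le> \<Delta>\<^sub>0"
    let ?U = "real (card {k. k < Suc K \<and> Delta k \<ge> d / \<gamma>dec \<and> \<not> Sc k})"
    let ?S = "real (card {k. k < Suc K \<and> Delta k \<ge> d / \<gamma>inc \<and> Sc k})"
    have p: "ln (max (Delta (Suc K)) d) + ln (1/\<gamma>dec) * ?U \<le> ln (max (Delta 0) d) + ln \<gamma>inc * ?S"
      using part1[of \<gamma>dec \<gamma>inc d Delta Sc \<Delta>max "Suc K"] params d upd by auto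
    have "ln (max (Delta (Suc K)) d) \<ge> ln d" using d by (subst ln_le_cancel_iff) auto
    moreover have "ln (max (Delta 0) d) = ln \<Delta>\<^sub>0" using d Delta0 by simp
    ultimately have "ln (1/\<gamma>dec) * ?U \<le> ln \<gamma>inc * ?S + (ln \<Delta>\<^sub>0 - ln d)" using p by linarith
    moreover have "ln \<Delta>\<^sub>0 - ln d = ln (\<Delta>\<^sub>0 / d)" using d params by (simp add: ln_div)
    ultimately have "ln (1/\<gamma>dec) * ?U \<le> ln \<gamma>inc * ?S + ln (\<Delta>\<^sub>0 / d)" by simp
    then have "?U \<le> (ln \<gamma>inc * ?S + ln (\<Delta>\<^sub>0 / d)) / ln (1/\<gamma>dec)"
      using a by (simp add: field_simps)
    also have "\<dots> = (ln \<gamma>inc / ln (1/\<gamma>dec)) * ?S + ln (\<Delta>\<^sub>0 / d) / ln (1/\<gamma>dec)"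
      by (simp add: add_divide_distrib)
    finally show "real (card {k \<in> {0..K}. Delta k \<ge> d / \<gamma>dec \<and>
                 \<not> successful \<eta> \<mu> f (x k) (P k) (g k) (H k) (s k) (Delta k)})
        \<le> (ln \<gamma>inc / ln (1 / \<gamma>dec)) *
             real (card {k \<in> {0..K}. Delta k \<ge> d / \<gamma>inc \<and>
                 successful \<eta> \<mu> f (x k) (P k) (g k) (H k) (s k) (Delta k)})
          + ln (\<Delta>\<^sub>0 / d) / ln (1 / \<gamma>dec)"
      unfolding setq Sc_def[symmetric] .
  next
    fix d assume d: "0 < d \<and> d \<le> min \<Delta>\<^sub>0 (\<Delta>max / \<gamma>inc)"
    let ?U = "real (card {k. k < Suc K \<and> Delta k < d / \<gamma>dec \<and> \<not> Sc k})"
    let ?S = "real (card {k. k < Suc K \<and> Delta k < d / \<gamma>inc \<and> Sc k})"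
    have p: "ln (min (Delta (Suc K)) d) + ln (1/\<gamma>dec) * ?U \<ge> ln (min (Delta 0) d) + ln \<gamma>inc * ?S"
      using part2[of \<gamma>dec \<gamma>inc d \<Delta>max Delta Sc "Suc K"] params d upd Dpos by auto
    have "ln (min (Delta (Suc K)) d) \<le> ln d" using d Dpos[of "Suc K"] by simp
    moreover have "ln (min (Delta 0) d) = ln d" using d Delta0 by simp
    ultimately have "ln \<gamma>inc * ?S \<le> ln (1/\<gamma>dec) * ?U" using p by linarith
    then have "?S \<le> (ln (1/\<gamma>dec) * ?U) / ln \<gamma>inc"
      using b by (simp add: field_simps)
    also have "\<dots> = (ln (1/\<gamma>dec) / ln \<gamma>inc) * ?U"
      by (simp add: field_simps)
    finally show "real (card {k \<in> {0..K}. Delta k < d / \<gamma>inc \<and>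
                 successful \<eta> \<mu> f (x k) (P k) (g k) (H k) (s k) (Delta k)})
        \<le> (ln (1 / \<gamma>dec) / ln \<gamma>inc) *
             real (card {k \<in> {0..K}. Delta k < d / \<gamma>dec \<and>
                 \<not> successful \<eta> \<mu> f (x k) (P k) (g k) (H k) (s k) (Delta k)})"
      unfolding setq Sc_def[symmetric] .
  qed
qed

end
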